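(* Let $\alpha,\beta\in[0,1]$ with $\alpha+\beta=1$, let $0<\delta<1/2$, and let $\xi$ be a real number with $\inf_{n\in\mathbb{N}} n\|n\xi\|\geqslant\delta$. Then for every positive integer $p$, $$\#\Big\{x\in\mathbb{N}:\ p<x\leqslant 2p,\ \|x\xi\|\leqslant \frac{\delta}{(p\log(p+1))^\beta}\Big\}\leqslant \frac{(24\delta+2)\,p^\alpha}{(\log(p+1))^\beta}.$$
   Context: $\|t\|$ denotes the distance from the real number $t$ to the nearest integer; $\log$ is the natural logarithm. *)

theory Defs
  imports Complex_Main
begin

definition dist_int :: "real \<Rightarrow> real" where
  "dist_int t = (INF k\<in>(UNIV::int set). \<bar>t - of_int k\<bar>)"

end

theory Submission
  imports Defs
begin

lemma dist_int_eq: "dist_int t = \<bar>t - of_int (round t)\<bar>"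
  unfolding dist_int_def
proof (rule antisym)
  show "(INF k\<in>(UNIV::int set). \<bar>t - of_int k\<bar>) \<le> \<bar>t - of_int (round t)\<bar>"
    by (rule cINF_lower) (auto intro: bdd_belowI[where m=0])
  show "\<bar>t - of_int (round t)\<bar> \<le> (INF k\<in>(UNIV::int set). \<bar>t - of_int k\<bar>)"
    by (rule cINF_greatest) (auto intro: round_diff_minimal)
qed

lemma dist_int_nonneg: "dist_int t \<ge> 0"
  by (simp add: dist_int_eq)

lemma dist_int_le: "dist_int t \<le> \<bar>t - of_int k\<bar>"
  by (simp add: dist_int_eq round_diff_minimal)

lemma dist_int_diff: "dist_int (s - t) \<le> dist_int s + dist_int t"
proof -
  have "dist_int (s - t) \<le> \<bar>(s - t) - of_int (round s - round t)\<bar>" by (rule dist_int_le)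
  also have "\<dots> \<le> \<bar>s - of_int (round s)\<bar> + \<bar>t - of_int (round t)\<bar>" by simp
  finally show ?thesis by (simp add: dist_int_eq)
qed

lemma spacing:
  fixes S :: "nat set" and G :: real and p :: nat
  assumes G: "G > 0" and p: "p > 0" and sub: "S \<subseteq> {p<..2*p}"
    and sp: "\<And>x y. x \<in> S \<Longrightarrow> y \<in> S \<Longrightarrow> x < y \<Longrightarrow> real y - real x \<ge> G"
  shows "real (card S) \<le> (real p - 1) / G + 1"
proof -
  define f where "f x = nat \<lfloor>(real x - real p - 1) / G\<rfloor>" for x :: nat
  have mono: "f x < f y" if "x \<in> S" "y \<in> S" "x < y" for x y
  proof -
    have "(real y - real p - 1) / G \<ge> (real x - real p - 1) / G + 1"
    proof -
      have "(real y - real p - 1) / G - (real x - real p - 1) / G = (real y - real x) / G"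
        by (simp add: diff_divide_distrib)
      also have "\<dots> \<ge> 1" using sp[OF that] G by simp
      finally show ?thesis by linarith
    qed
    hence h1: "\<lfloor>(real y - real p - 1) / G\<rfloor> \<ge> \<lfloor>(real x - real p - 1) / G\<rfloor> + 1"
      by (metis floor_add_int floor_mono of_int_1)
    have "(real x - real p - 1) / G \<ge> 0" using that sub G by auto
    hence h0: "0 \<le> \<lfloor>(real x - real p - 1) / G\<rfloor>" by simp
    show ?thesis unfolding f_def using h0 h1 by (subst nat_less_eq_zless) auto
  qed
  have inj: "inj_on f S"
  proof (rule inj_onI)
    fix x y assume "x \<in> S" "y \<in> S" "f x = f y"
    thus "x = y" using mono by (metis less_irrefl nat_neq_iff)
  qed
  have img: "f ` S \<subseteq> {0..nat \<lfloor>(real p - 1) / G\<rfloor>}"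
  proof
    fix z assume "z \<in> f ` S"
    then obtain x where x: "x \<in> S" "z = f x" by auto
    have "(real x - real p - 1) / G \<le> (real p - 1) / G"
      using x sub G by (auto simp: divide_right_mono)
    hence "\<lfloor>(real x - real p - 1) / G\<rfloor> \<le> \<lfloor>(real p - 1) / G\<rfloor>" by (rule floor_mono)
    thus "z \<in> {0..nat \<lfloor>(real p - 1) / G\<rfloor>}" using x unfolding f_def by auto
  qed
  have "card S = card (f ` S)" using inj by (simp add: card_image)
  also have "\<dots> \<le> nat \<lfloor>(real p - 1) / G\<rfloor> + 1"
    using card_mono[OF _ img] by simp
  finally have "real (card S) \<le> real (nat \<lfloor>(real p - 1) / G\<rfloor>) + 1" by linarith
  moreover have "real (nat \<lfloor>(real p - 1) / G\<rfloor>) \<le> (real p - 1) / G"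
    using p G by simp
  ultimately show ?thesis by linarith
qed


lemma pairB:
  fixes x y p :: nat and \<xi> \<epsilon> \<delta> :: real
  assumes xy: "p < x" "x < y" "y \<le> 2*p"
    and dx: "dist_int (real x * \<xi>) \<le> \<epsilon>" and dy: "dist_int (real y * \<xi>) \<le> \<epsilon>"
    and small: "4 * real p * \<epsilon> < 1" and d0: "0 < \<delta>"
    and hyp: "\<delta> \<le> (real y - real x) * dist_int ((real y - real x) * \<xi>)"
  shows "\<delta> * real p \<le> (real y - real x)^2 * \<epsilon>"
proof -
  define ax where "ax = round (real x * \<xi>)"
  define ay where "ay = round (real y * \<xi>)"
  define ex where "ex = real x * \<xi> - of_int ax"
  define ey where "ey = real y * \<xi> - of_int ay"
  have hex: "\<bar>ex\<bar> \<le> \<epsilon>" using dx by (simp add: dist_int_eq ex_def ax_def)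
  have hey: "\<bar>ey\<bar> \<le> \<epsilon>" using dy by (simp add: dist_int_eq ey_def ay_def)
  have e0: "\<epsilon> \<ge> 0" using hex by linarith
  define Z where "Z = int y * ax - int x * ay"
  have Zr: "real_of_int Z = real x * ey - real y * ex"
    by (simp add: Z_def ex_def ey_def algebra_simps)
  have "\<bar>real x * ey - real y * ex\<bar> \<le> \<bar>real x * ey\<bar> + \<bar>real y * ex\<bar>" by (rule abs_triangle_ineq4)
  also have "\<dots> = real x * \<bar>ey\<bar> + real y * \<bar>ex\<bar>" by (simp add: abs_mult)
  also have "\<dots> \<le> real x * \<epsilon> + real y * \<epsilon>"
    by (intro add_mono mult_left_mono hex hey) auto
  also have "\<dots> = (real x + real y) * \<epsilon>" by (simp add: algebra_simps)
  also have "\<dots> \<le> (4 * real p) * \<epsilon>" using xy e0 by (intro mult_right_mono) auto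
  finally have "\<bar>real_of_int Z\<bar> < 1" using Zr small by linarith
  hence "Z = 0" by linarith
  hence exy: "real x * ey = real y * ex" using Zr by simp
  have "dist_int ((real y - real x) * \<xi>) \<le> \<bar>(real y - real x) * \<xi> - of_int (ay - ax)\<bar>"
    by (rule dist_int_le)
  also have "\<dots> = \<bar>ey - ex\<bar>" by (simp add: ex_def ey_def algebra_simps)
  finally have dd: "dist_int ((real y - real x) * \<xi>) \<le> \<bar>ey - ex\<bar>" .
  have yrel: "real y * \<bar>ey - ex\<bar> = (real y - real x) * \<bar>ey\<bar>"
  proof -
    have "real y * (ey - ex) = (real y - real x) * ey" using exy by (simp add: algebra_simps)
    hence "\<bar>real y * (ey - ex)\<bar> = \<bar>(real y - real x) * ey\<bar>" by simp
    thus ?thesis using xy by (simp add: abs_mult)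
  qed
  have n0: "real y - real x \<ge> 0" using xy by simp
  have "\<delta> * real y \<le> (real y - real x) * dist_int ((real y - real x) * \<xi>) * real y"
    using hyp by (intro mult_right_mono) auto
  also have "\<dots> \<le> (real y - real x) * \<bar>ey - ex\<bar> * real y"
    using dd n0 by (intro mult_right_mono mult_left_mono) auto
  also have "\<dots> = (real y - real x) * ((real y - real x) * \<bar>ey\<bar>)"
    by (metis yrel mult.assoc mult.commute)
  also have "\<dots> \<le> (real y - real x) * ((real y - real x) * \<epsilon>)"
    using n0 hey by (intro mult_left_mono) auto
  finally have "\<delta> * real y \<le> (real y - real x)^2 * \<epsilon>" by (simp add: power2_eq_square algebra_simps)
  moreover have "\<delta> * real p \<le> \<delta> * real y" using d0 xy by simp
  ultimately show ?thesis by linarith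
qed


theorem lemma2:
  fixes \<alpha> \<beta> \<delta> \<xi> :: real and p :: nat
  assumes "0 \<le> \<alpha>" "\<alpha> \<le> 1" "0 \<le> \<beta>" "\<beta> \<le> 1" "\<alpha> + \<beta> = 1"
    and "0 < \<delta>" "\<delta> < 1/2"
    and "(INF n\<in>{n::nat. n \<ge> 1}. real n * dist_int (real n * \<xi>)) \<ge> \<delta>"
    and "p > 0"
  shows "real (card {x::nat. p < x \<and> x \<le> 2*p \<and>
            dist_int (real x * \<xi>) \<le> \<delta> / (real p * ln (real p + 1)) powr \<beta>})
         \<le> (24*\<delta> + 2) * real p powr \<alpha> / (ln (real p + 1)) powr \<beta>"
proof -
  note a = assms
  define L where "L = ln (real p + 1)"
  define B where "B = (real p * L) powr \<beta>"
  define \<epsilon> where "\<epsilon> = \<delta> / B"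
  define u where "u = real p powr \<alpha> / L powr \<beta>"
  define S where "S = {x::nat. p < x \<and> x \<le> 2*p \<and> dist_int (real x * \<xi>) \<le> \<epsilon>}"
  have p1: "real p \<ge> 1" using a by simp
  have L0: "L > 0" unfolding L_def using p1 by simp
  have B0: "B > 0" unfolding B_def using L0 p1 by simp
  have uB: "u = real p / B"
  proof -
    have "real p powr \<alpha> = real p powr (1 - \<beta>)" using a(5) by (metis add_diff_cancel_right')
    also have "\<dots> = real p / real p powr \<beta>" using p1 by (simp add: powr_diff)
    finally show ?thesis unfolding u_def B_def using p1 L0 by (simp add: powr_mult)
  qed
  have u0: "u \<ge> 0" unfolding uB using B0 by simp
  have peps: "real p * \<epsilon> = \<delta> * u" unfolding uB \<epsilon>_def by simp
  have goal_eq: "(24*\<delta> + 2) * real p powr \<alpha> / (ln (real p + 1)) powr \<beta> = (24*\<delta> + 2) * u"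
    unfolding u_def L_def by simp
  have S_eq: "{x::nat. p < x \<and> x \<le> 2*p \<and>
            dist_int (real x * \<xi>) \<le> \<delta> / (real p * ln (real p + 1)) powr \<beta>} = S"
    unfolding S_def \<epsilon>_def B_def L_def by simp
  have sub: "S \<subseteq> {p<..2*p}" unfolding S_def by auto
  have fin: "finite S" using sub finite_subset by blast
  have hyp: "\<delta> \<le> real n * dist_int (real n * \<xi>)" if "n \<ge> 1" for n :: nat
  proof -
    have "bdd_below ((\<lambda>n. real n * dist_int (real n * \<xi>)) ` {n::nat. n \<ge> 1})"
      by (rule bdd_belowI[where m=0]) (auto simp: dist_int_nonneg)
    hence "(INF n\<in>{n::nat. n \<ge> 1}. real n * dist_int (real n * \<xi>)) \<le> real n * dist_int (real n * \<xi>)"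
      by (rule cINF_lower) (use that in auto)
    thus ?thesis using a(8) by linarith
  qed
  have hypd: "\<delta> \<le> (real y - real x) * dist_int ((real y - real x) * \<xi>)" if "x < y" for x y :: nat
    using hyp[of "y - x"] that by (simp add: of_nat_diff)
  have Sd: "dist_int (real x * \<xi>) \<le> \<epsilon>" if "x \<in> S" for x using that unfolding S_def by auto
  show ?thesis
  proof (cases "S = {}")
    case True
    thus ?thesis unfolding S_eq goal_eq using u0 a by simp
  next
    case False
    then obtain x0 where x0: "x0 \<in> S" by auto
    have "\<delta> \<le> real x0 * dist_int (real x0 * \<xi>)" using hyp[of x0] x0 sub by auto
    also have "\<dots> \<le> (2 * real p) * \<epsilon>"
      using x0 sub Sd[OF x0] dist_int_nonneg[of "real x0 * \<xi>"]
      by (intro mult_mono) auto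
    finally have "\<delta> \<le> 2 * (\<delta> * u)" using peps by simp
    hence uh: "u \<ge> 1/2" using a by simp
    show ?thesis
    proof (cases "4 * real p * \<epsilon> \<ge> 1")
      case True
      have sp: "real y - real x \<ge> B / 2" if "x \<in> S" "y \<in> S" "x < y" for x y
      proof -
        have "dist_int ((real y - real x) * \<xi>) \<le> dist_int (real y * \<xi>) + dist_int (real x * \<xi>)"
          using dist_int_diff[of "real y * \<xi>" "real x * \<xi>"] by (simp add: algebra_simps)
        also have "\<dots> \<le> 2 * \<epsilon>" using Sd[OF that(1)] Sd[OF that(2)] by simp
        finally have "\<delta> \<le> (real y - real x) * (2 * \<epsilon>)"
          using hypd[OF that(3)] that(3) by (meson order_trans mult_left_mono diff_ge_0_iff_ge of_nat_le_iff less_imp_le)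
        hence "\<delta> * B \<le> (real y - real x) * (2 * \<epsilon>) * B" using B0 by (simp add: mult_right_mono)
        also have "\<dots> = (real y - real x) * 2 * (\<epsilon> * B)" by (simp add: algebra_simps)
        also have "\<dots> = (real y - real x) * 2 * \<delta>" unfolding \<epsilon>_def using B0 by simp
        finally have "\<delta> * B \<le> (real y - real x) * 2 * \<delta>" .
        hence "\<delta> * B \<le> \<delta> * ((real y - real x) * 2)" by (simp add: mult_ac)
        hence "B \<le> (real y - real x) * 2" using a(6) by (simp add: mult_le_cancel_left_pos)
        thus ?thesis by simp
      qed
      have "real (card S) \<le> (real p - 1) / (B/2) + 1"
        by (rule spacing[OF _ a(9) sub sp]) (use B0 in auto)
      also have "\<dots> \<le> 2 * u + 1" unfolding uB using B0 by (simp add: field_simps)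
      also have "\<dots> \<le> 2 * u + 4 * \<delta> * u" using True peps by simp
      also have "\<dots> \<le> (24*\<delta> + 2) * u" using u0 a by (simp add: algebra_simps)
      finally show ?thesis unfolding S_eq goal_eq .
    next
      case small: False
      show ?thesis
      proof (cases "card S \<le> 1")
        case True
        hence "real (card S) \<le> 2 * u" using uh by simp
        also have "\<dots> \<le> (24*\<delta> + 2) * u" using u0 a by (simp add: algebra_simps)
        finally show ?thesis unfolding S_eq goal_eq .
      next
        case False
        have pb: "\<delta> * real p \<le> (real y - real x)^2 * \<epsilon>" if "x \<in> S" "y \<in> S" "x < y" for x y
          by (rule pairB[of p x y]) (use that sub Sd small a hypd in auto)
        have pb2: "real p * B \<le> (real y - real x)^2" if "x \<in> S" "y \<in> S" "x < y" for x y
        proof -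
          have "\<delta> * real p \<le> (real y - real x)^2 * \<delta> / B" using pb[OF that] unfolding \<epsilon>_def by simp
          hence "\<delta> * (real p * B) \<le> \<delta> * (real y - real x)^2" using B0 by (simp add: field_simps)
          thus ?thesis using a by simp
        qed
        obtain x y where xy: "x \<in> S" "y \<in> S" "x \<noteq> y"
          using False by (metis One_nat_def card_le_Suc0_iff_eq fin not_less_eq_eq)
        have "\<exists>x y. x \<in> S \<and> y \<in> S \<and> x < y"
          using xy by (metis nat_neq_iff)
        then obtain x1 y1 where xy1: "x1 \<in> S" "y1 \<in> S" "x1 < y1" by blast
        have "x1 > p" "y1 \<le> 2*p" using xy1 sub by auto
        hence "real y1 - real x1 < real p" by linarith
        moreover have "real y1 - real x1 \<ge> 0" using xy1 by simp
        ultimately have "(real y1 - real x1)^2 < real p ^ 2"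
          by (simp add: power_strict_mono)
        hence "real p * B < real p * real p" using pb2[OF xy1] by (simp add: power2_eq_square)
        hence Bp: "B < real p" using p1 by simp
        hence u1: "u > 1" unfolding uB using B0 by simp
        have sp: "real y - real x \<ge> B" if "x \<in> S" "y \<in> S" "x < y" for x y
        proof (rule ccontr)
          assume "\<not> ?thesis"
          hence "real y - real x < B" by simp
          moreover have "real y - real x \<ge> 0" using that by simp
          ultimately have "(real y - real x)^2 < B^2" by (simp add: power_strict_mono)
          also have "\<dots> < real p * B" using Bp B0 by (simp add: power2_eq_square)
          finally show False using pb2[OF that] by simp
        qed
        have "real (card S) \<le> (real p - 1) / B + 1"
          by (rule spacing[OF B0 a(9) sub sp])
        also have "\<dots> \<le> u + 1" unfolding uB using B0 by (simp add: field_simps)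
        also have "\<dots> \<le> (24*\<delta> + 2) * u"
        proof -
          have "0 \<le> 24 * \<delta> * u" using u1 a(6) by simp
          thus ?thesis using u1 by (simp add: algebra_simps)
        qed
        finally show ?thesis unfolding S_eq goal_eq .
      qed
    qed
  qed
qed

end
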